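(* Suppose all tasks have cost $\ell_{\min}$ or $\ell_{\max}$ ($0<\ell_{\min}<\ell_{\max}$) and $\gamma$n-Burst is run with speedup $s>1$ satisfying $s\ge\frac{\gamma\ell_{\min}+\ell_{\max}}{\ell_{\max}}$, where $\gamma=\lceil\frac{\ell_{\max}-s\ell_{\min}}{(s-1)\ell_{\min}}\rceil$. Then under any adversarial pattern $\mathcal{A}$ and at any time, the number of pending $\ell_{\max}$-tasks in the execution of $\gamma$n-Burst is never larger than the number of pending $\ell_{\max}$-tasks in the execution of OPT plus $n^2+2n$.
   Context: Model: $n$ processors with ids $1,\dots,n$ and a shared repository. An adversarial pattern $\mathcal{A}$ is a set of timed events: task injections (unique id, arrival time, cost), processor crashes and restarts (restarted processors remember only the algorithm and $n$). A task is pending if injected and its completion not yet reported; once reported it is removed. A processor repeatedly obtains the pending set, chooses a task, executes it (a task of cost $\ell$ takes time $\ell/s$ with speedup $s$) and reports it; execution is non-preemptive and a crash loses progress. At any time, reports are processed before injections, which precede requests for the pending set. OPT denotes an optimal offline algorithm: it knows $\mathcal{A}$ in advance, has unlimited computational power, and runs under $\mathcal{A}$ with speedup $1$. Algorithm $\gamma$n-Burst for processor $p$: counter $c$ set to $0$ on (re)start; each cycle it forms lists $L_{\min},L_{\max}$ of pending tasks of cost $\ell_{\min},\ell_{\max}$ sorted by arrival. Case 1 (both lists $<n^2$): if previous task had cost $\ell_{\min}$, perform task at position $(pn)\bmod|L_{\max}|$ of $L_{\max}$, $c\gets0$; else task at position $(pn)\bmod|L_{\min}|$ of $L_{\min}$,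 $c\gets\min(c+1,\gamma)$. Case 2 ($|L_{\min}|\ge n^2>|L_{\max}|$): position $pn$ of $L_{\min}$, $c\gets\min(c+1,\gamma)$. Case 3 ($|L_{\max}|\ge n^2>|L_{\min}|$): position $pn$ of $L_{\max}$, $c\gets0$. Case 4 (both $\ge n^2$): if $c=\gamma$, position $pn$ of $L_{\max}$, $c\gets0$; else position $pn$ of $L_{\min}$, $c\gets\min(c+1,\gamma)$. Then report the task. *)

theory Defs
  imports Complex_Main "HOL-Library.Product_Lexorder"
begin

text \<open>A task is a triple (arrival time, unique id, cost).  The lexicographic order on
  such triples sorts tasks by arrival time, ties broken by id.\<close>
type_synonym task = "real \<times> nat \<times> real"

definition arr :: "task \<Rightarrow> real" where "arr \<tau> = fst \<tau>"
definition tid :: "task \<Rightarrow> nat" where "tid \<tau> = fst (snd \<tau>)"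
definition cost :: "task \<Rightarrow> real" where "cost \<tau> = snd (snd \<tau>)"

record pattern =
  injected :: "task set"
  crashes :: "nat \<Rightarrow> real set"
  restarts :: "nat \<Rightarrow> real set"

definition wf_pattern :: "pattern \<Rightarrow> bool" where
  "wf_pattern A \<longleftrightarrow>
     inj_on tid (injected A) \<and>
     (\<forall>t. finite {\<tau> \<in> injected A. arr \<tau> \<le> t}) \<and>
     (\<forall>p t. finite (crashes A p \<inter> {..t}) \<and> finite (restarts A p \<inter> {..t})) \<and>
     (\<forall>p. crashes A p \<inter> restarts A p = {})"

text \<open>Processor p is alive at time t (all processors start at time 0): every crash at or
  before t has been followed by a restart at or before t.  A crash at time t makes p dead at t.\<close>
definition alive :: "pattern \<Rightarrow> nat \<Rightarrow> real \<Rightarrow> bool" where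
  "alive A p t \<longleftrightarrow> 0 \<le> t \<and>
     (\<forall>c \<in> crashes A p. c \<le> t \<longrightarrow> (\<exists>r \<in> restarts A p. c < r \<and> r \<le> t))"

text \<open>An execution is a set of runs (p, t, task): processor p starts executing the task at time t.
  With speedup s the run takes time cost/s; it is reported at t + cost/s iff p stays alive
  throughout [t, t + cost/s].\<close>
type_synonym run = "nat \<times> real \<times> task"

definition completed :: "pattern \<Rightarrow> real \<Rightarrow> nat \<Rightarrow> real \<Rightarrow> task \<Rightarrow> bool" where
  "completed A s p t \<tau> \<longleftrightarrow> (\<forall>u \<in> {t .. t + cost \<tau> / s}. alive A p u)"

text \<open>Pending set at time t (reports at time t are processed before injections at time t,
  which precede requests at time t).\<close>
definition pending :: "pattern \<Rightarrow> real \<Rightarrow> run set \<Rightarrow> real \<Rightarrow> task set" where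
  "pending A s E t = {\<tau> \<in> injected A. arr \<tau> \<le> t \<and>
      \<not> (\<exists>p t1. (p, t1, \<tau>) \<in> E \<and> completed A s p t1 \<tau> \<and> t1 + cost \<tau> / s \<le> t)}"

definition runs_cover :: "pattern \<Rightarrow> real \<Rightarrow> run set \<Rightarrow> nat \<Rightarrow> real \<Rightarrow> (real \<times> task) set" where
  "runs_cover A s E p t = {(t1, \<tau>1). (p, t1, \<tau>1) \<in> E \<and> t1 \<le> t \<and> t < t1 + cost \<tau>1 / s \<and>
      (\<forall>u \<in> {t1 .. t}. alive A p u)}"

text \<open>Local state: (counter c, whether the previous task had cost l_min).\<close>
definition burst_step :: "real \<Rightarrow> nat \<Rightarrow> real \<Rightarrow> nat \<times> bool \<Rightarrow> nat \<times> bool" where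
  "burst_step lmin \<gamma> l st = (if l = lmin then (min (fst st + 1) \<gamma>, True) else (0, False))"

text \<open>State of p just before its request at time t: fold over the tasks p reported since its
  last (re)start, in order.\<close>
definition burst_state :: "real \<Rightarrow> nat \<Rightarrow> pattern \<Rightarrow> real \<Rightarrow> run set \<Rightarrow> nat \<Rightarrow> real \<Rightarrow> nat \<times> bool" where
  "burst_state lmin \<gamma> A s E p t =
     fold (burst_step lmin \<gamma>)
       (map (cost \<circ> snd) (sorted_list_of_set {(t1, \<tau>1). (p, t1, \<tau>1) \<in> E \<and> t1 < t \<and>
           completed A s p t1 \<tau>1 \<and> (\<forall>u \<in> {t1 .. t}. alive A p u)}))
       (0, False)"

definition burst_choice :: "nat \<Rightarrow> nat \<Rightarrow> real \<Rightarrow> real \<Rightarrow> nat \<Rightarrow> nat \<times> bool \<Rightarrow> task set \<Rightarrow> task" where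
  "burst_choice n \<gamma> lmin lmax p st P =
    (let Lmin = sorted_list_of_set {\<tau> \<in> P. cost \<tau> = lmin};
         Lmax = sorted_list_of_set {\<tau> \<in> P. cost \<tau> = lmax};
         k = n ^ 2
     in if length Lmin < k \<and> length Lmax < k then
          (if (snd st \<and> Lmax \<noteq> []) \<or> Lmin = [] then Lmax ! (p * n mod length Lmax)
           else Lmin ! (p * n mod length Lmin))
        else if length Lmax < k then Lmin ! (p * n - 1)
        else if length Lmin < k then Lmax ! (p * n - 1)
        else if fst st = \<gamma> then Lmax ! (p * n - 1)
        else Lmin ! (p * n - 1))"

definition burst_exec :: "nat \<Rightarrow> nat \<Rightarrow> real \<Rightarrow> real \<Rightarrow> real \<Rightarrow> pattern \<Rightarrow> run set \<Rightarrow> bool" where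
  "burst_exec n \<gamma> lmin lmax s A E \<longleftrightarrow>
     (\<forall>(p, t, \<tau>) \<in> E. p \<in> {1..n} \<and> alive A p t \<and> runs_cover A s E p t = {(t, \<tau>)} \<and>
        pending A s E t \<noteq> {} \<and>
        \<tau> = burst_choice n \<gamma> lmin lmax p (burst_state lmin \<gamma> A s E p t) (pending A s E t)) \<and>
     (\<forall>p \<in> {1..n}. \<forall>t. alive A p t \<and> runs_cover A s E p t = {} \<and> pending A s E t \<noteq> {}
        \<longrightarrow> (\<exists>\<tau>. (p, t, \<tau>) \<in> E))"

text \<open>X is an execution of an arbitrary offline algorithm (in particular OPT) under A with speedup 1,
  recorded by its successful runs: each run executes a pending task on an alive processor until
  it is reported, and runs on the same processor do not overlap.\<close>
definition offline_exec :: "nat \<Rightarrow> pattern \<Rightarrow> run set \<Rightarrow> bool" where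
  "offline_exec n A X \<longleftrightarrow>
     (\<forall>(p, t, \<tau>) \<in> X. p \<in> {1..n} \<and> \<tau> \<in> pending A 1 X t \<and> completed A 1 p t \<tau> \<and>
        (\<forall>t' \<tau>'. (p, t', \<tau>') \<in> X \<and> (t', \<tau>') \<noteq> (t, \<tau>) \<longrightarrow>
            t' + cost \<tau>' \<le> t \<or> t + cost \<tau> \<le> t'))"

end

theory Submission
  imports Defs
begin


lemma sorted_idx_card:
  fixes S :: "'a::linorder set"
  assumes "finite S" "i < card S"
  shows "card {y \<in> S. y < sorted_list_of_set S ! i} = i"
proof -
  define xs where "xs = sorted_list_of_set S"
  have sw: "sorted_wrt (<) xs" and len: "length xs = card S" and st: "set xs = S" and dist: "distinct xs"
    using assms by (auto simp: xs_def)
  have "{y \<in> S. y < xs ! i} = set (take i xs)"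
  proof safe
    fix y assume "y \<in> S" "y < xs ! i"
    then obtain j where j: "j < length xs" "xs ! j = y" using st by (auto simp: in_set_conv_nth)
    have "j < i"
    proof (rule ccontr)
      assume "\<not> j < i"
      then have "i \<le> j" by simp
      then have "xs ! i \<le> xs ! j" using sw j len assms(2)
        by (metis order_le_less sorted_wrt_iff_nth_less)
      then show False using j \<open>y < xs ! i\<close> by simp
    qed
    then show "y \<in> set (take i xs)" using j by (auto simp: in_set_conv_nth intro!: exI[of _ j])
  next
    fix y assume "y \<in> set (take i xs)"
    then show "y \<in> S" using st by (meson in_set_takeD)
  next
    fix y assume "y \<in> set (take i xs)"
    then obtain j where j: "j < i" "xs ! j = y" using len assms(2) by (auto simp: in_set_conv_nth)
    then show "y < xs ! i" using sw len assms(2) by (metis sorted_wrt_iff_nth_less)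
  qed
  moreover have "card (set (take i xs)) = i" using dist len assms(2)
    by (simp add: distinct_card)
  ultimately show ?thesis by (simp add: xs_def)
qed

lemma sorted_list_insert_max:
  fixes S :: "'a::linorder set"
  assumes "finite S" "\<forall>y\<in>S. y < x"
  shows "sorted_list_of_set (insert x S) = sorted_list_of_set S @ [x]"
proof -
  have "x \<notin> S" using assms by auto
  then have "sorted_list_of_set (insert x S) = insort x (sorted_list_of_set S)"
    using assms by (simp add: sorted_list_of_set_insert)
  also have "\<dots> = sorted_list_of_set S @ [x]"
    using assms by (intro sorted_insort_is_snoc) auto
  finally show ?thesis .
qed

lemma fold_step_le: "fst st \<le> g \<Longrightarrow> fst (fold (burst_step lmin g) ls st) \<le> g"
  by (induction ls arbitrary: st) (auto simp: burst_step_def)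

lemma burst_state_le: "fst (burst_state lmin g A s E p t) \<le> g"
  unfolding burst_state_def by (rule fold_step_le) simp




lemma choice_eq_big:
  assumes "length (sorted_list_of_set {\<tau> \<in> P. cost \<tau> = lmax}) \<ge> n^2"
  shows "burst_choice n g lmin lmax p st P =
    (if length (sorted_list_of_set {\<tau> \<in> P. cost \<tau> = lmin}) \<ge> n^2 \<and> fst st \<noteq> g
     then sorted_list_of_set {\<tau> \<in> P. cost \<tau> = lmin} ! (p*n - 1)
     else sorted_list_of_set {\<tau> \<in> P. cost \<tau> = lmax} ! (p*n - 1))"
  using assms unfolding burst_choice_def Let_def by auto

lemma nth_sorted_in:
  assumes "finite S" "i < card S"
  shows "sorted_list_of_set S ! i \<in> S"
  using assms by (metis length_sorted_list_of_set nth_mem set_sorted_list_of_set)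

lemma choice_in:
  assumes fin: "finite P" and ne: "P \<noteq> {}" and c: "\<forall>\<tau>\<in>P. cost \<tau> = lmin \<or> cost \<tau> = lmax"
    and p: "1 \<le> p" "p \<le> n"
  shows "burst_choice n g lmin lmax p st P \<in> P"
proof -
  let ?A = "{\<tau> \<in> P. cost \<tau> = lmin}" and ?B = "{\<tau> \<in> P. cost \<tau> = lmax}"
  have fA: "finite ?A" and fB: "finite ?B" using fin by auto
  have idx: "p*n - 1 < n^2" using p by (simp add: power2_eq_square) (metis Suc_le_eq le_trans mult_le_mono1 not_less_eq_eq diff_Suc_less mult_pos_pos less_le_trans zero_less_one)
  have AB: "?A \<noteq> {} \<or> ?B \<noteq> {}" using ne c by blast
  have inA: "\<And>i. i < card ?A \<Longrightarrow> sorted_list_of_set ?A ! i \<in> P"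
    using nth_sorted_in[OF fA] by blast
  have inB: "\<And>i. i < card ?B \<Longrightarrow> sorted_list_of_set ?B ! i \<in> P"
    using nth_sorted_in[OF fB] by blast
  have cA: "card ?A > 0 \<longleftrightarrow> ?A \<noteq> {}" using fA by (simp add: card_gt_0_iff)
  have cB: "card ?B > 0 \<longleftrightarrow> ?B \<noteq> {}" using fB by (simp add: card_gt_0_iff)
  have mA: "?A \<noteq> {} \<Longrightarrow> sorted_list_of_set ?A ! (p*n mod length (sorted_list_of_set ?A)) \<in> P"
    using inA cA fA by simp
  have mB: "?B \<noteq> {} \<Longrightarrow> sorted_list_of_set ?B ! (p*n mod length (sorted_list_of_set ?B)) \<in> P"
    using inB cB fB by simp
  have eA: "sorted_list_of_set ?A = [] \<longleftrightarrow> ?A = {}" using fA by simp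
  have eB: "sorted_list_of_set ?B = [] \<longleftrightarrow> ?B = {}" using fB by simp
  have lA: "length (sorted_list_of_set ?A) = card ?A" and lB: "length (sorted_list_of_set ?B) = card ?B" by simp_all
  show ?thesis
    unfolding burst_choice_def Let_def
    apply (simp only: lA lB)
    using idx AB inA inB mA mB eA eB lA lB
    by (smt (verit) less_le_trans not_le)
qed




locale bsetting =
  fixes n \<gamma> :: nat and lmin lmax s :: real and A :: pattern and E :: "run set"
  assumes n1: "n \<ge> 1" and lmin0: "0 < lmin" and lminmax: "lmin < lmax" and s1: "s > 1"
    and sgam: "s \<ge> (real \<gamma> * lmin + lmax) / lmax"
    and wf: "wf_pattern A"
    and costs: "\<forall>\<tau> \<in> injected A. cost \<tau> = lmin \<or> cost \<tau> = lmax"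
    and bex: "burst_exec n \<gamma> lmin lmax s A E"
begin

abbreviation "pend u \<equiv> pending A s E u"
abbreviation "Pmax u \<equiv> {\<tau> \<in> pend u. cost \<tau> = lmax}"
abbreviation "Pmin u \<equiv> {\<tau> \<in> pend u. cost \<tau> = lmin}"
abbreviation "st p u \<equiv> burst_state lmin \<gamma> A s E p u"
abbreviation "cmp p u \<tau> \<equiv> completed A s p u \<tau>"
abbreviation "cover p u \<equiv> runs_cover A s E p u"

lemma run_props:
  assumes "(p,u,\<tau>) \<in> E"
  shows "p \<in> {1..n}" "alive A p u" "cover p u = {(u,\<tau>)}" "pend u \<noteq> {}"
    "\<tau> = burst_choice n \<gamma> lmin lmax p (st p u) (pend u)"
  using bex assms unfolding burst_exec_def by fastforce+

lemma free_start:
  assumes "p \<in> {1..n}" "alive A p u" "cover p u = {}" "pend u \<noteq> {}"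
  shows "\<exists>\<tau>. (p,u,\<tau>) \<in> E"
  using bex assms unfolding burst_exec_def by blast

lemma finite_pend: "finite (pend u)"
proof -
  have "finite {\<tau> \<in> injected A. arr \<tau> \<le> u}" using wf unfolding wf_pattern_def by blast
  moreover have "pend u \<subseteq> {\<tau> \<in> injected A. arr \<tau> \<le> u}" unfolding pending_def by auto
  ultimately show ?thesis by (rule finite_subset[rotated])
qed

lemma pend_inj: "\<tau> \<in> pend u \<Longrightarrow> \<tau> \<in> injected A \<and> arr \<tau> \<le> u"
  unfolding pending_def by auto

lemma run_in_pend: assumes "(p,u,\<tau>) \<in> E" shows "\<tau> \<in> pend u"
proof -
  have "p \<in> {1..n}" using run_props[OF assms] by auto
  then show ?thesis
    using run_props[OF assms] choice_in[OF finite_pend, of u lmin lmax p n \<gamma> "st p u"]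
      costs pend_inj by auto
qed

lemma run_cost: assumes "(p,u,\<tau>) \<in> E"
  shows "cost \<tau> = lmin \<or> cost \<tau> = lmax" "cost \<tau> \<ge> lmin" "cost \<tau> \<le> lmax" "cost \<tau> > 0"
proof -
  have "cost \<tau> = lmin \<or> cost \<tau> = lmax" using run_in_pend[OF assms] pend_inj costs by blast
  then show "cost \<tau> = lmin \<or> cost \<tau> = lmax" "cost \<tau> \<ge> lmin" "cost \<tau> \<le> lmax" "cost \<tau> > 0"
    using lmin0 lminmax by auto
qed

lemma comp_alive: "cmp p a x \<Longrightarrow> a \<le> b \<Longrightarrow> b \<le> a + cost x / s \<Longrightarrow> alive A p b"
  unfolding completed_def by auto

lemma nonoverlap:
  assumes r1: "(p,a,x) \<in> E" and r2: "(p,b,y) \<in> E" and c1: "cmp p a x"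
    and ab: "a \<le> b" "b < a + cost x / s"
  shows "a = b \<and> x = y"
proof -
  have "(a,x) \<in> cover p b"
    unfolding runs_cover_def using r1 ab c1 by (auto intro: comp_alive)
  then show ?thesis using run_props(3)[OF r2] by auto
qed

lemma nonoverlap2:
  assumes r1: "(p,a,x) \<in> E" and r2: "(p,b,y) \<in> E" and c1: "cmp p a x" and c2: "cmp p b y"
    and ne: "(a,x) \<noteq> (b,y)"
  shows "a + cost x / s \<le> b \<or> b + cost y / s \<le> a"
proof (cases "a \<le> b")
  case True then show ?thesis using nonoverlap[OF r1 r2 c1] ne by force
next
  case False then show ?thesis using nonoverlap[OF r2 r1 c2] ne by force
qed

lemma same_start: "(p,a,x) \<in> E \<Longrightarrow> (p,a,y) \<in> E \<Longrightarrow> x = y"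
  using run_props(3) by blast

lemma alive_nonneg: "alive A p u \<Longrightarrow> 0 \<le> u" unfolding alive_def by auto

lemma finite_completed:
  "finite {(t1,\<tau>1). (p,t1,\<tau>1) \<in> E \<and> cmp p t1 \<tau>1 \<and> t1 \<le> T}"
proof -
  let ?R = "{(t1,\<tau>1). (p,t1,\<tau>1) \<in> E \<and> cmp p t1 \<tau>1 \<and> t1 \<le> T}"
  define f where "f = (\<lambda>(t1::real,\<tau>1::task). nat \<lfloor>t1 * s / lmin\<rfloor>)"
  have sp: "s > 0" using s1 by simp
  have inj: "inj_on f ?R"
  proof (rule inj_onI)
    fix r1 r2 assume a: "r1 \<in> ?R" "r2 \<in> ?R" "f r1 = f r2"
    obtain a1 x1 where r1: "r1 = (a1,x1)" by (cases r1)
    obtain a2 x2 where r2: "r2 = (a2,x2)" by (cases r2)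
    show "r1 = r2"
    proof (rule ccontr)
      assume ne: "r1 \<noteq> r2"
      have E1: "(p,a1,x1) \<in> E" "cmp p a1 x1" and E2: "(p,a2,x2) \<in> E" "cmp p a2 x2"
        using a r1 r2 by auto
      have nn: "0 \<le> a1" "0 \<le> a2" using run_props(2) E1 E2 alive_nonneg by blast+
      have "a1 + cost x1 / s \<le> a2 \<or> a2 + cost x2 / s \<le> a1"
        using nonoverlap2[OF E1(1) E2(1) E1(2) E2(2)] ne r1 r2 by auto
      moreover have "cost x1 \<ge> lmin" "cost x2 \<ge> lmin" using run_cost E1 E2 by blast+
      ultimately have "a1 + lmin / s \<le> a2 \<or> a2 + lmin / s \<le> a1"
        using sp by (smt (verit) divide_right_mono)
      moreover have "\<And>x y. x + lmin / s \<le> y \<Longrightarrow> x * s / lmin + 1 \<le> y * s / lmin"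
      proof -
        fix x y assume h: "x + lmin / s \<le> y"
        have "(x + lmin / s) * s / lmin \<le> y * s / lmin"
          using h sp lmin0 by (intro divide_right_mono mult_right_mono) auto
        moreover have "(x + lmin / s) * s / lmin = x * s / lmin + 1"
          using sp lmin0 by (simp add: field_simps)
        ultimately show "x * s / lmin + 1 \<le> y * s / lmin" by simp
      qed
      ultimately have "a1 * s / lmin + 1 \<le> a2 * s / lmin \<or> a2 * s / lmin + 1 \<le> a1 * s / lmin"
        by blast
      then have "\<lfloor>a1 * s / lmin\<rfloor> \<noteq> \<lfloor>a2 * s / lmin\<rfloor>" by linarith
      moreover have "0 \<le> \<lfloor>a1 * s / lmin\<rfloor>" "0 \<le> \<lfloor>a2 * s / lmin\<rfloor>"
        using nn sp lmin0 by auto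
      ultimately have "f r1 \<noteq> f r2" unfolding f_def r1 r2 by (simp add: nat_eq_iff2)
      then show False using a by simp
    qed
  qed
  have "f ` ?R \<subseteq> {..nat \<lfloor>T * s / lmin\<rfloor>}"
  proof
    fix y assume "y \<in> f ` ?R"
    then obtain a1 x1 where "(a1,x1) \<in> ?R" "y = f (a1,x1)" by auto
    then have aT: "a1 \<le> T" and yeq: "y = nat \<lfloor>a1 * s / lmin\<rfloor>" unfolding f_def by auto
    have "a1 * s / lmin \<le> T * s / lmin" using aT sp lmin0
      by (simp add: divide_right_mono mult_right_mono)
    then show "y \<in> {..nat \<lfloor>T * s / lmin\<rfloor>}" using yeq by (simp add: floor_mono nat_mono)
  qed
  then have "finite (f ` ?R)" by (rule finite_subset) simp
  then show ?thesis using inj finite_imageD by blast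
qed

end



lemma idx_lt: "1 \<le> p \<Longrightarrow> p \<le> (n::nat) \<Longrightarrow> p*n - 1 < n^2"
proof -
  assume a: "1 \<le> p" "p \<le> n"
  then have "p * n \<le> n * n" by simp
  moreover have "p * n \<ge> 1" using a by simp
  ultimately have "p*n - 1 < n * n" by linarith
  then show ?thesis by (simp add: power2_eq_square)
qed

context bsetting begin

definition R where "R p u = {(t1,\<tau>1). (p,t1,\<tau>1) \<in> E \<and> t1 < u \<and> cmp p t1 \<tau>1 \<and> (\<forall>x\<in>{t1..u}. alive A p x)}"

lemma st_def': "st p u = fold (burst_step lmin \<gamma>) (map (cost \<circ> snd) (sorted_list_of_set (R p u))) (0, False)"
  unfolding burst_state_def R_def by simp

lemma finite_R: "finite (R p u)"
  by (rule finite_subset[OF _ finite_completed[of p u]]) (auto simp: R_def)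

lemma state_step:
  assumes r: "(p,u,\<tau>) \<in> E" and c: "cmp p u \<tau>"
  shows "st p (u + cost \<tau> / s) = burst_step lmin \<gamma> (cost \<tau>) (st p u)"
proof -
  let ?e = "u + cost \<tau> / s"
  have cpos: "cost \<tau> / s > 0" using run_cost(4)[OF r] s1 by simp
  have "R p ?e = insert (u,\<tau>) (R p u)"
  proof (rule set_eqI, rule iffI)
    fix z assume z: "z \<in> R p ?e"
    obtain t1 \<tau>1 where zz: "z = (t1,\<tau>1)" by (cases z)
    have E1: "(p,t1,\<tau>1) \<in> E" "t1 < ?e" "cmp p t1 \<tau>1" "\<forall>x\<in>{t1..?e}. alive A p x"
      using z zz by (auto simp: R_def)
    consider "t1 < u" | "t1 = u" | "u < t1" by linarith
    then show "z \<in> insert (u,\<tau>) (R p u)"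
    proof cases
      case 1
      have "\<forall>x\<in>{t1..u}. alive A p x" using E1(4) cpos by auto
      then show ?thesis using E1 zz 1 by (auto simp: R_def)
    next
      case 2 then show ?thesis using same_start[OF r] E1 zz by auto
    next
      case 3
      have "u = t1 \<and> \<tau> = \<tau>1" using nonoverlap[OF r E1(1) c] 3 E1(2) by auto
      then show ?thesis using 3 by simp
    qed
  next
    fix z assume z: "z \<in> insert (u,\<tau>) (R p u)"
    show "z \<in> R p ?e"
    proof (cases "z = (u,\<tau>)")
      case True then show ?thesis using r c cpos unfolding R_def completed_def by auto
    next
      case False
      then obtain t1 \<tau>1 where zz: "z = (t1,\<tau>1)" "(p,t1,\<tau>1) \<in> E" "t1 < u" "cmp p t1 \<tau>1"
        "\<forall>x\<in>{t1..u}. alive A p x" using z by (auto simp: R_def)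
      have "\<forall>x\<in>{t1..?e}. alive A p x"
      proof
        fix x assume "x \<in> {t1..?e}"
        then show "alive A p x" using zz(5) c unfolding completed_def
          by (cases "x \<le> u") auto
      qed
      then show ?thesis using zz cpos by (auto simp: R_def)
    qed
  qed
  moreover have "\<forall>y\<in>R p u. y < (u,\<tau>)" by (auto simp: R_def)
  ultimately have "sorted_list_of_set (R p ?e) = sorted_list_of_set (R p u) @ [(u,\<tau>)]"
    using sorted_list_insert_max[OF finite_R] by simp
  then show ?thesis unfolding st_def' by simp
qed

lemma cover_run:
  assumes p: "p \<in> {1..n}" and al: "alive A p w" and ne: "pend w \<noteq> {}"
  shows "\<exists>v \<sigma>. (p,v,\<sigma>) \<in> E \<and> v \<le> w \<and> w < v + cost \<sigma> / s \<and> (\<forall>x\<in>{v..w}. alive A p x)"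
proof (cases "cover p w = {}")
  case True
  then obtain \<sigma> where r: "(p,w,\<sigma>) \<in> E" using free_start[OF p al _ ne] by blast
  have "cost \<sigma> / s > 0" using run_cost(4)[OF r] s1 by simp
  then show ?thesis using r al by (intro exI[of _ w] exI[of _ \<sigma>]) auto
next
  case False
  then obtain v \<sigma> where "(v,\<sigma>) \<in> cover p w" by auto
  then show ?thesis unfolding runs_cover_def by blast
qed

lemma next_run:
  assumes r: "(p,v,\<tau>) \<in> E" and c: "cmp p v \<tau>" and ne: "pend (v + cost \<tau> / s) \<noteq> {}"
  shows "\<exists>\<sigma>. (p, v + cost \<tau> / s, \<sigma>) \<in> E"
proof -
  let ?e = "v + cost \<tau> / s"
  have p: "p \<in> {1..n}" using run_props(1)[OF r] .
  have "v \<le> ?e" using run_cost(4)[OF r] s1 by simp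
  then have al: "alive A p ?e" using c unfolding completed_def by auto
  show ?thesis
  proof (cases "cover p ?e = {}")
    case True then show ?thesis using free_start[OF p al _ ne] by blast
  next
    case False
    then obtain t1 \<tau>1 where cv: "(p,t1,\<tau>1) \<in> E" "t1 \<le> ?e" "?e < t1 + cost \<tau>1 / s"
      "\<forall>x\<in>{t1..?e}. alive A p x" unfolding runs_cover_def by auto
    have "t1 = ?e"
    proof (rule ccontr)
      assume "t1 \<noteq> ?e"
      then have lt: "t1 < ?e" using cv by simp
      show False
      proof (cases "v \<le> t1")
        case True
        have "v = t1 \<and> \<tau> = \<tau>1" using nonoverlap[OF r cv(1) c True lt] .
        then show False using cv(3) by simp
      next
        case False
        have vle: "v \<le> ?e" using run_cost(4)[OF r] s1 by simp
        have "\<forall>x\<in>{t1..v}. alive A p x" using cv(4) vle by auto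
        then have "(t1,\<tau>1) \<in> cover p v"
          unfolding runs_cover_def using cv False vle by auto
        then show False using run_props(3)[OF r] False by auto
      qed
    qed
    then show ?thesis using cv by blast
  qed
qed

lemma choice_big:
  assumes r: "(p,u,\<tau>) \<in> E" and big: "card (Pmax u) \<ge> n^2"
  shows "(cost \<tau> = lmax \<and> \<tau> = sorted_list_of_set (Pmax u) ! (p*n - 1)) \<or>
         (cost \<tau> = lmin \<and> fst (st p u) < \<gamma>)"
proof -
  have p: "1 \<le> p" "p \<le> n" using run_props(1)[OF r] by auto
  have idx: "p*n - 1 < n^2" using idx_lt[OF p] .
  have fin: "finite (Pmax u)" "finite (Pmin u)" using finite_pend by auto
  have eq: "\<tau> = (if length (sorted_list_of_set (Pmin u)) \<ge> n^2 \<and> fst (st p u) \<noteq> \<gamma>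
     then sorted_list_of_set (Pmin u) ! (p*n - 1)
     else sorted_list_of_set (Pmax u) ! (p*n - 1))"
    using run_props(5)[OF r] choice_eq_big[where P="pend u" and st="st p u" and g=\<gamma> and n=n and lmin=lmin and lmax=lmax and p=p] big by simp
  show ?thesis
  proof (cases "length (sorted_list_of_set (Pmin u)) \<ge> n^2 \<and> fst (st p u) \<noteq> \<gamma>")
    case True
    then have "\<tau> \<in> Pmin u" using eq nth_sorted_in[OF fin(2), of "p*n-1"] idx by auto
    moreover have "fst (st p u) < \<gamma>" using True burst_state_le[of lmin \<gamma> A s E p u] by simp
    ultimately show ?thesis by auto
  next
    case False
    then have "\<tau> = sorted_list_of_set (Pmax u) ! (p*n - 1)" using eq by (simp only: if_False)
    moreover then have "\<tau> \<in> Pmax u" using nth_sorted_in[OF fin(1), of "p*n-1"] idx big by auto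
    ultimately show ?thesis by auto
  qed
qed

end



context bsetting begin

lemma big_ne: "card (Pmax v) \<ge> n^2 \<Longrightarrow> pend v \<noteq> {}"
proof -
  assume "card (Pmax v) \<ge> n^2"
  moreover have "n^2 \<ge> 1" using n1 by simp
  ultimately have "card (Pmax v) \<noteq> 0" by linarith
  then have "Pmax v \<noteq> {}" by (metis card.empty)
  then show ?thesis by auto
qed

lemma chain:
  assumes big: "\<forall>v. t0 \<le> v \<and> v \<le> t \<longrightarrow> card (Pmax v) \<ge> n^2"
  shows "(p,u,\<tau>) \<in> E \<Longrightarrow> t0 \<le> u \<Longrightarrow> k = \<gamma> - fst (st p u) \<Longrightarrow>
    u + (real k * lmin + lmax) / s \<le> t \<Longrightarrow>
    (\<forall>x\<in>{u..u + (real k * lmin + lmax) / s}. alive A p x) \<Longrightarrow>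
    \<exists>u' \<tau>'. (p,u',\<tau>') \<in> E \<and> cost \<tau>' = lmax \<and> cmp p u' \<tau>' \<and> u \<le> u' \<and>
       u' + lmax / s \<le> u + (real k * lmin + lmax) / s \<and> ((u' = u \<and> \<tau>' = \<tau>) \<or> u + cost \<tau> / s \<le> u')"
proof (induction k arbitrary: u \<tau>)
  case 0
  have sp: "s > 0" using s1 by simp
  have "lmax / s > 0" using lminmax lmin0 sp by simp
  then have ut: "u \<le> t" using 0(4) by simp
  have "card (Pmax u) \<ge> n^2" using big 0 ut by blast
  then have "cost \<tau> = lmax" using choice_big[OF 0(1)] 0(3) by auto
  moreover have "cmp p u \<tau>" unfolding completed_def using 0(5) \<open>cost \<tau> = lmax\<close> by auto
  ultimately show ?case using 0 by (intro exI[of _ u] exI[of _ \<tau>]) auto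
next
  case (Suc k)
  have sp: "s > 0" using s1 by simp
  have pos: "(real (Suc k) * lmin + lmax) / s > 0" using lmin0 lminmax sp by (simp add: add_pos_pos)
  have ut: "u \<le> t" using Suc(5) pos by simp
  have bigu: "card (Pmax u) \<ge> n^2" using big Suc ut by blast
  have mono1: "lmax / s \<le> (real (Suc k) * lmin + lmax) / s" using lmin0 sp
    by (intro divide_right_mono) auto
  have mono2: "lmin / s \<le> (real (Suc k) * lmin + lmax) / s" using lmin0 lminmax sp
    by (intro divide_right_mono) (auto simp: algebra_simps)
  from choice_big[OF Suc(2) bigu] show ?case
  proof
    assume h: "cost \<tau> = lmax \<and> \<tau> = sorted_list_of_set (Pmax u) ! (p*n - 1)"
    have "cmp p u \<tau>" unfolding completed_def using Suc(6) h mono1 by auto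
    then show ?thesis using Suc(2) h mono1 by (intro exI[of _ u] exI[of _ \<tau>]) auto
  next
    assume h: "cost \<tau> = lmin \<and> fst (st p u) < \<gamma>"
    let ?e = "u + lmin / s"
    have c: "cmp p u \<tau>" unfolding completed_def using Suc(6) h mono2 by auto
    have e_le: "?e \<le> t" using Suc(5) mono2 by simp
    have "lmin / s > 0" using lmin0 sp by simp
    then have t0e: "t0 \<le> ?e" using Suc(3) by simp
    have "pend ?e \<noteq> {}" using big_ne big t0e e_le by blast
    then obtain \<sigma> where r2: "(p, ?e, \<sigma>) \<in> E" using next_run[OF Suc(2) c] h by auto
    have ste: "st p ?e = burst_step lmin \<gamma> lmin (st p u)" using state_step[OF Suc(2) c] h by simp
    have fe: "fst (st p ?e) = fst (st p u) + 1" using ste h by (simp add: burst_step_def)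
    have k: "k = \<gamma> - fst (st p ?e)" using fe Suc(4) by simp
    have eq: "?e + (real k * lmin + lmax) / s = u + (real (Suc k) * lmin + lmax) / s"
      using sp by (simp add: field_simps)
    have ue: "u \<le> ?e" using lmin0 sp by simp
    have al: "\<forall>x\<in>{?e..?e + (real k * lmin + lmax) / s}. alive A p x"
    proof
      fix x assume "x \<in> {?e..?e + (real k * lmin + lmax) / s}"
      then have "x \<in> {u..u + (real (Suc k) * lmin + lmax) / s}" using ue eq by auto
      then show "alive A p x" using Suc(6) by blast
    qed
    obtain u' \<tau>' where IH: "(p,u',\<tau>') \<in> E" "cost \<tau>' = lmax" "cmp p u' \<tau>'" "?e \<le> u'"
      "u' + lmax / s \<le> ?e + (real k * lmin + lmax) / s"
      using Suc.IH[OF r2 t0e k] eq Suc(5) al by auto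
    have "u \<le> u'" using IH(4) ue by linarith
    moreover have "u + cost \<tau> / s \<le> u'" using IH(4) h by simp
    ultimately show ?thesis using IH eq by (intro exI[of _ u'] exI[of _ \<tau>']) auto
  qed
qed

end



lemma task_less_arr: "(y::task) < \<tau> \<Longrightarrow> arr y \<le> arr \<tau>"
  by (cases y, cases \<tau>) (auto simp: less_prod_def arr_def)

context bsetting begin

lemma pend_iff: "x \<in> pend u \<longleftrightarrow> x \<in> injected A \<and> arr x \<le> u \<and>
   \<not> (\<exists>p t1. (p, t1, x) \<in> E \<and> cmp p t1 x \<and> t1 + cost x / s \<le> u)"
  unfolding pending_def by auto

lemma noredund:
  assumes big: "\<forall>v. t0 \<le> v \<and> v \<le> t \<longrightarrow> card (Pmax v) \<ge> n^2"
    and r1: "(p,u,\<tau>) \<in> E" and r2: "(q,v,\<tau>) \<in> E" and ct: "cost \<tau> = lmax"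
    and c1: "cmp p u \<tau>" and tu: "t0 \<le> u" and uv: "u \<le> v" and vt: "v \<le> t"
  shows "p = q \<and> u = v"
proof -
  have sp: "s > 0" using s1 by simp
  have tp: "\<tau> \<in> pend v" using run_in_pend[OF r2] .
  have vlt: "v < u + cost \<tau> / s"
    using tp r1 c1 unfolding pend_iff by force
  show ?thesis
  proof (cases "p = q")
    case True
    then show ?thesis using nonoverlap[OF r1 _ c1 uv vlt] r2 by auto
  next
    case False
    have bu: "card (Pmax u) \<ge> n^2" using big tu uv vt by auto
    have bv: "card (Pmax v) \<ge> n^2" using big tu uv vt by auto
    have tu_eq: "\<tau> = sorted_list_of_set (Pmax u) ! (p*n - 1)"
      using choice_big[OF r1 bu] ct lminmax by auto
    have tv_eq: "\<tau> = sorted_list_of_set (Pmax v) ! (q*n - 1)"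
      using choice_big[OF r2 bv] ct lminmax by auto
    have pp: "1 \<le> p" "p \<le> n" using run_props(1)[OF r1] by auto
    have qq: "1 \<le> q" "q \<le> n" using run_props(1)[OF r2] by auto
    have fin: "finite (Pmax u)" "finite (Pmax v)" using finite_pend by auto
    define Au where "Au = {y \<in> Pmax u. y < \<tau>}"
    define Av where "Av = {y \<in> Pmax v. y < \<tau>}"
    have cAu: "card Au = p*n - 1"
      unfolding Au_def using sorted_idx_card[OF fin(1), of "p*n-1"] idx_lt[OF pp] bu tu_eq by simp
    have cAv: "card Av = q*n - 1"
      unfolding Av_def using sorted_idx_card[OF fin(2), of "q*n-1"] idx_lt[OF qq] bv tv_eq by simp
    have atu: "arr \<tau> \<le> u" using run_in_pend[OF r1] pend_inj by blast
    have sub: "Av \<subseteq> Au"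
    proof
      fix y assume y: "y \<in> Av"
      then have "y \<in> pend v" "y < \<tau>" "cost y = lmax" unfolding Av_def by auto
      moreover have "arr y \<le> u" using task_less_arr[OF \<open>y < \<tau>\<close>] atu by simp
      ultimately have "y \<in> pend u" using uv unfolding pend_iff by force
      then show "y \<in> Au" using \<open>y < \<tau>\<close> \<open>cost y = lmax\<close> unfolding Au_def by simp
    qed
    have finAu: "finite Au" using fin(1) unfolding Au_def by (rule finite_subset[rotated]) auto
    define D where "D = Au - Av"
    have cD: "card D = (p*n - 1) - (q*n - 1)"
      unfolding D_def using card_Diff_subset[OF finite_subset[OF sub finAu] sub] cAu cAv by simp
    have qp: "q*n - 1 \<le> p*n - 1" using card_mono[OF finAu sub] cAu cAv by simp
    have pn1: "q*n \<ge> 1" "p*n \<ge> 1" using pp qq n1 by simp_all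
    have "q*n \<le> p*n" using qp pn1 by linarith
    then have "q \<le> p" using n1 by simp
    then have "q + 1 \<le> p" using False by simp
    then have "q*n + n \<le> p*n" by (metis add_mult_distrib mult_1 mult_le_mono1)
    then have cDn: "card D \<ge> n" using cD pn1 by linarith
    have compl: "\<forall>x\<in>D. \<exists>rw. (fst rw, snd rw, x) \<in> E \<and> cmp (fst rw) (snd rw) x \<and>
        u < snd rw + cost x / s \<and> snd rw + cost x / s \<le> v"
    proof
      fix x assume x: "x \<in> D"
      then have xu: "x \<in> pend u" and xnv: "x \<notin> pend v" and cx: "cost x = lmax"
        unfolding D_def Au_def Av_def using sub by auto
      obtain r w where rw: "(r,w,x) \<in> E" "cmp r w x" "w + cost x / s \<le> v"
        using xu xnv uv unfolding pend_iff by force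
      have "\<not> (w + cost x / s \<le> u)" using xu rw unfolding pend_iff by blast
      then show "\<exists>rw. (fst rw, snd rw, x) \<in> E \<and> cmp (fst rw) (snd rw) x \<and>
        u < snd rw + cost x / s \<and> snd rw + cost x / s \<le> v"
        using rw by (intro exI[of _ "(r,w)"]) auto
    qed
    define f where "f x = (SOME rw. (fst rw, snd rw, x) \<in> E \<and> cmp (fst rw) (snd rw) x \<and>
        u < snd rw + cost x / s \<and> snd rw + cost x / s \<le> v)" for x
    have fP: "\<And>x. x \<in> D \<Longrightarrow> (fst (f x), snd (f x), x) \<in> E \<and> cmp (fst (f x)) (snd (f x)) x \<and>
        u < snd (f x) + cost x / s \<and> snd (f x) + cost x / s \<le> v"
    proof -
      fix x assume xD: "x \<in> D"
      show "?thesis x" unfolding f_def by (rule someI_ex[OF bspec[OF compl xD]])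
    qed
    have cD_lmax: "\<And>x. x \<in> D \<Longrightarrow> cost x = lmax" unfolding D_def Au_def by auto
    have inj: "inj_on (fst \<circ> f) D"
    proof (rule inj_onI)
      fix x y assume x: "x \<in> D" and y: "y \<in> D" and eq: "(fst \<circ> f) x = (fst \<circ> f) y"
      show "x = y"
      proof (rule ccontr)
        assume ne: "x \<noteq> y"
        let ?r = "fst (f x)"
        have rx: "(?r, snd (f x), x) \<in> E" "cmp ?r (snd (f x)) x" using fP[OF x] by auto
        have ry: "(?r, snd (f y), y) \<in> E" "cmp ?r (snd (f y)) y" using fP[OF y] eq by auto
        have "snd (f x) + cost x / s \<le> snd (f y) \<or> snd (f y) + cost y / s \<le> snd (f x)"
          using nonoverlap2[OF rx(1) ry(1) rx(2) ry(2)] ne by auto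
        moreover have "u < snd (f x) + lmax / s" "snd (f x) + lmax / s \<le> v"
          using fP[OF x] cD_lmax[OF x] by auto
        moreover have "u < snd (f y) + lmax / s" "snd (f y) + lmax / s \<le> v"
          using fP[OF y] cD_lmax[OF y] by auto
        moreover have "v < u + lmax / s" using vlt ct by simp
        ultimately show False using cD_lmax[OF x] cD_lmax[OF y] by auto
      qed
    qed
    have img: "(fst \<circ> f) ` D \<subseteq> {1..n} - {p}"
    proof
      fix z assume "z \<in> (fst \<circ> f) ` D"
      then obtain x where x: "x \<in> D" "z = fst (f x)" by auto
      have rx: "(z, snd (f x), x) \<in> E" "cmp z (snd (f x)) x" using fP[OF x(1)] x by auto
      have "z \<in> {1..n}" using run_props(1)[OF rx(1)] .
      moreover have "z \<noteq> p"
      proof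
        assume zp: "z = p"
        have xt: "x \<noteq> \<tau>" using x(1) unfolding D_def Au_def by auto
        have "snd (f x) + cost x / s \<le> u \<or> u + cost \<tau> / s \<le> snd (f x)"
          using nonoverlap2[OF rx(1)[unfolded zp] r1 rx(2)[unfolded zp] c1] xt by auto
        moreover have "u < snd (f x) + lmax / s" "snd (f x) + lmax / s \<le> v"
          using fP[OF x(1)] cD_lmax[OF x(1)] by auto
        moreover have "v < u + lmax / s" using vlt ct by simp
        ultimately show False using cD_lmax[OF x(1)] ct by auto
      qed
      ultimately show "z \<in> {1..n} - {p}" by simp
    qed
    have "card D \<le> card ({1..n} - {p})"
      using card_inj_on_le[OF inj img] by simp
    also have "\<dots> = n - 1" using pp by simp
    finally show ?thesis using cDn n1 by simp
  qed
qed

end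



context bsetting begin

lemma window_le: "k \<le> \<gamma> \<Longrightarrow> (real k * lmin + lmax) / s \<le> lmax"
proof -
  assume k: "k \<le> \<gamma>"
  have sp: "s > 0" using s1 by simp
  have "real k * lmin \<le> real \<gamma> * lmin" using k lmin0 by (simp add: mult_right_mono)
  moreover have "real \<gamma> * lmin + lmax \<le> s * lmax"
    using sgam lminmax lmin0 by (simp add: pos_divide_le_eq)
  ultimately have "real k * lmin + lmax \<le> lmax * s" by (simp add: mult.commute)
  then show ?thesis using sp by (simp add: pos_divide_le_eq)
qed

lemma good_near:
  assumes big: "\<forall>v. t0 \<le> v \<and> v \<le> t \<longrightarrow> card (Pmax v) \<ge> n^2"
    and p: "p \<in> {1..n}" and al: "\<forall>x\<in>{w..w+lmax}. alive A p x"
    and tw: "t0 + lmax / s \<le> w" and wt: "w + lmax \<le> t"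
  shows "\<exists>u' \<tau>'. (p,u',\<tau>') \<in> E \<and> cost \<tau>' = lmax \<and> cmp p u' \<tau>' \<and> t0 \<le> u' \<and>
           w < u' + lmax / s \<and> u' + lmax / s \<le> w + lmax"
proof -
  have sp: "s > 0" using s1 by simp
  have lp: "lmax / s > 0" using lmin0 lminmax sp by simp
  have alw: "alive A p w" using al lminmax lmin0 by auto
  have "pend w \<noteq> {}" using big_ne big tw wt lp lminmax lmin0 by auto
  then obtain v \<sigma> where cv: "(p,v,\<sigma>) \<in> E" "v \<le> w" "w < v + cost \<sigma> / s" "\<forall>x\<in>{v..w}. alive A p x"
    using cover_run[OF p alw] by blast
  have "cost \<sigma> / s \<le> lmax / s" using run_cost(3)[OF cv(1)] sp by (simp add: divide_right_mono)
  then have t0v: "t0 \<le> v" using cv(3) tw by linarith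
  define k where "k = \<gamma> - fst (st p v)"
  have kg: "k \<le> \<gamma>" unfolding k_def by simp
  have W: "(real k * lmin + lmax) / s \<le> lmax" using window_le[OF kg] .
  have vW: "v + (real k * lmin + lmax) / s \<le> t" using W cv(2) wt by linarith
  have alW: "\<forall>x\<in>{v..v + (real k * lmin + lmax) / s}. alive A p x"
  proof
    fix x assume x: "x \<in> {v..v + (real k * lmin + lmax) / s}"
    show "alive A p x"
    proof (cases "x \<le> w")
      case True then show ?thesis using cv(4) x by auto
    next
      case False then show ?thesis using al x W cv(2) by auto
    qed
  qed
  obtain u' \<tau>' where ch: "(p,u',\<tau>') \<in> E" "cost \<tau>' = lmax" "cmp p u' \<tau>'" "v \<le> u'"
    "u' + lmax / s \<le> v + (real k * lmin + lmax) / s" "(u' = v \<and> \<tau>' = \<sigma>) \<or> v + cost \<sigma> / s \<le> u'"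
    using chain[OF big cv(1) t0v k_def vW alW] by blast
  have "w < u' + lmax / s"
    using ch(6)
  proof
    assume "u' = v \<and> \<tau>' = \<sigma>" then show ?thesis using cv(3) ch(2) by simp
  next
    assume "v + cost \<sigma> / s \<le> u'" then show ?thesis using cv(3) lp by linarith
  qed
  moreover have "u' + lmax / s \<le> w + lmax" using ch(5) W cv(2) by linarith
  ultimately show ?thesis using ch t0v by (intro exI[of _ u'] exI[of _ \<tau>']) auto
qed

end



context bsetting begin

definition ctime where "ctime r = fst (snd r) + cost (snd (snd r)) / s"
definition CR where "CR t = {r \<in> E. cmp (fst r) (fst (snd r)) (snd (snd r)) \<and> ctime r \<le> t}"
definition Ev where "Ev t = arr ` {\<tau> \<in> injected A. arr \<tau> \<le> t} \<union> ctime ` CR t"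

definition Pm where "Pm e = {\<tau> \<in> injected A. arr \<tau> < e \<and>
   \<not> (\<exists>p t1. (p,t1,\<tau>) \<in> E \<and> cmp p t1 \<tau> \<and> t1 + cost \<tau> / s < e)}"

lemma Ev_arr: "\<tau> \<in> injected A \<Longrightarrow> arr \<tau> \<le> t \<Longrightarrow> arr \<tau> \<in> Ev t"
  unfolding Ev_def by blast

lemma Ev_comp: "(p,v,\<tau>) \<in> E \<Longrightarrow> cmp p v \<tau> \<Longrightarrow> v + cost \<tau> / s \<le> t \<Longrightarrow> v + cost \<tau> / s \<in> Ev t"
proof -
  assume h: "(p,v,\<tau>) \<in> E" "cmp p v \<tau>" "v + cost \<tau> / s \<le> t"
  have "(p,v,\<tau>) \<in> CR t" unfolding CR_def ctime_def using h by simp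
  moreover have "ctime (p,v,\<tau>) = v + cost \<tau> / s" unfolding ctime_def by simp
  ultimately show ?thesis unfolding Ev_def by (intro UnI2) (metis image_eqI)
qed

lemma Ev_le: "e \<in> Ev t \<Longrightarrow> e \<le> t"
  unfolding Ev_def CR_def by blast

lemma finite_Ev: "finite (Ev t)"
proof -
  have f1: "finite {\<tau> \<in> injected A. arr \<tau> \<le> t}" using wf unfolding wf_pattern_def by blast
  have sub: "CR t \<subseteq> (\<Union>p\<in>{1..n}. (\<lambda>vt. (p, vt)) ` {(t1,\<tau>1). (p,t1,\<tau>1) \<in> E \<and> cmp p t1 \<tau>1 \<and> t1 \<le> t})"
  proof
    fix r assume r: "r \<in> CR t"
    obtain p v \<tau> where rr: "r = (p,v,\<tau>)" by (cases r) auto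
    have h: "(p,v,\<tau>) \<in> E" "cmp p v \<tau>" "v + cost \<tau> / s \<le> t"
      using r unfolding rr CR_def ctime_def by auto
    have "cost \<tau> / s > 0" using run_cost(4)[OF h(1)] s1 by simp
    then have "v \<le> t" using h(3) by simp
    then have "(v,\<tau>) \<in> {(t1,\<tau>1). (p,t1,\<tau>1) \<in> E \<and> cmp p t1 \<tau>1 \<and> t1 \<le> t}" using h by simp
    then show "r \<in> (\<Union>p\<in>{1..n}. (\<lambda>vt. (p, vt)) ` {(t1,\<tau>1). (p,t1,\<tau>1) \<in> E \<and> cmp p t1 \<tau>1 \<and> t1 \<le> t})"
      using run_props(1)[OF h(1)] unfolding rr by (intro UN_I[of p]) auto
  qed
  have "finite (\<Union>p\<in>{1..n}. (\<lambda>vt. (p, vt)) ` {(t1,\<tau>1). (p,t1,\<tau>1) \<in> E \<and> cmp p t1 \<tau>1 \<and> t1 \<le> t})"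
    using finite_completed by (intro finite_UN_I) auto
  then have "finite (CR t)" using sub finite_subset by blast
  then show ?thesis unfolding Ev_def using f1 by simp
qed

lemma noev:
  assumes ab: "a \<le> b" "b \<le> t" and ne: "\<forall>e\<in>Ev t. \<not> (a < e \<and> e \<le> b)"
  shows "pend b = pend a"
proof (rule set_eqI)
  fix \<tau>
  have arr_eq: "\<tau> \<in> injected A \<Longrightarrow> arr \<tau> \<le> b \<longleftrightarrow> arr \<tau> \<le> a"
  proof -
    assume inj: "\<tau> \<in> injected A"
    { assume "arr \<tau> \<le> b" "\<not> arr \<tau> \<le> a"
      then have "arr \<tau> \<in> Ev t" using inj ab by (intro Ev_arr) auto
      then have False using ne \<open>arr \<tau> \<le> b\<close> \<open>\<not> arr \<tau> \<le> a\<close> by auto }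
    then show ?thesis using ab by force
  qed
  have c_eq: "(\<exists>p t1. (p,t1,\<tau>) \<in> E \<and> cmp p t1 \<tau> \<and> t1 + cost \<tau> / s \<le> b) \<longleftrightarrow>
              (\<exists>p t1. (p,t1,\<tau>) \<in> E \<and> cmp p t1 \<tau> \<and> t1 + cost \<tau> / s \<le> a)"
  proof
    assume "\<exists>p t1. (p,t1,\<tau>) \<in> E \<and> cmp p t1 \<tau> \<and> t1 + cost \<tau> / s \<le> b"
    then obtain p t1 where h: "(p,t1,\<tau>) \<in> E" "cmp p t1 \<tau>" "t1 + cost \<tau> / s \<le> b" by blast
    have "t1 + cost \<tau> / s \<in> Ev t" using h ab by (intro Ev_comp) auto
    then have "t1 + cost \<tau> / s \<le> a" using ne h(3) by force
    then show "\<exists>p t1. (p,t1,\<tau>) \<in> E \<and> cmp p t1 \<tau> \<and> t1 + cost \<tau> / s \<le> a" using h by blast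
  next
    assume "\<exists>p t1. (p,t1,\<tau>) \<in> E \<and> cmp p t1 \<tau> \<and> t1 + cost \<tau> / s \<le> a"
    then show "\<exists>p t1. (p,t1,\<tau>) \<in> E \<and> cmp p t1 \<tau> \<and> t1 + cost \<tau> / s \<le> b" using ab by force
  qed
  show "\<tau> \<in> pend b \<longleftrightarrow> \<tau> \<in> pend a" unfolding pending_def using arr_eq c_eq by auto
qed

lemma noev2:
  assumes ae: "a < e" "e \<le> t" and ne: "\<forall>e'\<in>Ev t. \<not> (a < e' \<and> e' < e)"
  shows "Pm e = pend a"
proof (rule set_eqI)
  fix \<tau>
  have arr_eq: "\<tau> \<in> injected A \<Longrightarrow> arr \<tau> < e \<longleftrightarrow> arr \<tau> \<le> a"
  proof -
    assume inj: "\<tau> \<in> injected A"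
    { assume "arr \<tau> < e" "\<not> arr \<tau> \<le> a"
      then have "arr \<tau> \<in> Ev t" using inj ae by (intro Ev_arr) auto
      then have False using ne \<open>arr \<tau> < e\<close> \<open>\<not> arr \<tau> \<le> a\<close> by auto }
    then show ?thesis using ae by force
  qed
  have c_eq: "(\<exists>p t1. (p,t1,\<tau>) \<in> E \<and> cmp p t1 \<tau> \<and> t1 + cost \<tau> / s < e) \<longleftrightarrow>
              (\<exists>p t1. (p,t1,\<tau>) \<in> E \<and> cmp p t1 \<tau> \<and> t1 + cost \<tau> / s \<le> a)"
  proof
    assume "\<exists>p t1. (p,t1,\<tau>) \<in> E \<and> cmp p t1 \<tau> \<and> t1 + cost \<tau> / s < e"
    then obtain p t1 where h: "(p,t1,\<tau>) \<in> E" "cmp p t1 \<tau>" "t1 + cost \<tau> / s < e" by blast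
    have "t1 + cost \<tau> / s \<in> Ev t" using h ae by (intro Ev_comp) auto
    then have "t1 + cost \<tau> / s \<le> a" using ne h(3) by force
    then show "\<exists>p t1. (p,t1,\<tau>) \<in> E \<and> cmp p t1 \<tau> \<and> t1 + cost \<tau> / s \<le> a" using h by blast
  next
    assume "\<exists>p t1. (p,t1,\<tau>) \<in> E \<and> cmp p t1 \<tau> \<and> t1 + cost \<tau> / s \<le> a"
    then show "\<exists>p t1. (p,t1,\<tau>) \<in> E \<and> cmp p t1 \<tau> \<and> t1 + cost \<tau> / s < e" using ae by force
  qed
  show "\<tau> \<in> Pm e \<longleftrightarrow> \<tau> \<in> pend a" unfolding pending_def Pm_def using arr_eq c_eq by auto
qed

lemma exists_t0:
  assumes bt: "card (Pmax t) \<ge> n^2"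
  shows "\<exists>t0 \<le> t. card {\<tau> \<in> Pm t0. cost \<tau> = lmax} < n^2 \<and>
           (\<forall>v. t0 \<le> v \<and> v \<le> t \<longrightarrow> card (Pmax v) \<ge> n^2)"
proof -
  define m where "m = Min (insert t (Ev t)) - 1"
  have finI: "finite (insert t (Ev t))" using finite_Ev by simp
  have evle: "\<forall>e\<in>Ev t. e \<le> t" using Ev_le by blast
  have mle: "\<forall>e\<in>insert t (Ev t). m < e"
  proof
    fix e assume "e \<in> insert t (Ev t)"
    then have "Min (insert t (Ev t)) \<le> e" using finI by (rule Min_le[rotated])
    then show "m < e" unfolding m_def by simp
  qed
  have Pm_m: "Pm m = {}"
  proof -
    { fix \<tau> assume "\<tau> \<in> Pm m"
      then have "\<tau> \<in> injected A" "arr \<tau> < m" unfolding Pm_def by auto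
      moreover have "m \<le> t" using mle by auto
      ultimately have "arr \<tau> \<in> Ev t" by (intro Ev_arr) auto
      then have False using mle \<open>arr \<tau> < m\<close> by fastforce }
    then show ?thesis by blast
  qed
  define C where "C = {e \<in> insert m (Ev t). card {\<tau> \<in> Pm e. cost \<tau> = lmax} < n^2}"
  have n2: "n^2 \<ge> 1" using n1 by simp
  have mC: "m \<in> C" unfolding C_def using Pm_m n1 by simp
  have finC: "finite C" unfolding C_def using finite_Ev by simp
  define t0 where "t0 = Max C"
  have t0C: "t0 \<in> C" unfolding t0_def using finC mC Max_in by blast
  have t0max: "\<forall>e\<in>C. e \<le> t0" unfolding t0_def using finC by simp
  have "t0 \<in> insert m (Ev t)" using t0C unfolding C_def by simp
  moreover have "m \<le> t" using mle by auto
  ultimately have t0t: "t0 \<le> t" using evle by auto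
  have old: "card {\<tau> \<in> Pm t0. cost \<tau> = lmax} < n^2" using t0C unfolding C_def by simp
  have big: "\<forall>v. t0 \<le> v \<and> v \<le> t \<longrightarrow> card (Pmax v) \<ge> n^2"
  proof (intro allI impI, rule ccontr)
    fix v assume v: "t0 \<le> v \<and> v \<le> t" and nb: "\<not> n^2 \<le> card (Pmax v)"
    show False
    proof (cases "\<exists>e\<in>Ev t. v < e")
      case True
      define e' where "e' = Min {e \<in> Ev t. v < e}"
      have fe: "finite {e \<in> Ev t. v < e}" using finite_Ev by simp
      have e'in: "e' \<in> Ev t" "v < e'" using Min_in[OF fe] True unfolding e'_def by auto
      have e'min: "\<forall>e\<in>Ev t. v < e \<longrightarrow> e' \<le> e" using fe unfolding e'_def by auto
      have "\<forall>e2\<in>Ev t. \<not> (v < e2 \<and> e2 < e')" using e'min by fastforce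
      then have "Pm e' = pend v"
        using noev2[of v e'] e'in evle by blast
      then have "e' \<in> C" using nb e'in unfolding C_def by simp
      then have "e' \<le> t0" using t0max by blast
      then show False using e'in v by simp
    next
      case False
      then have "\<forall>e2\<in>Ev t. \<not> (v < e2 \<and> e2 \<le> t)" by auto
      then have "pend t = pend v" using noev[of v t] v by blast
      then show False using nb bt by simp
    qed
  qed
  show ?thesis using t0t old big by blast
qed

end



locale bsetting2 = bsetting +
  fixes X :: "run set"
  assumes oex: "offline_exec n A X"
begin

lemma xrun: assumes "(p,w,\<tau>) \<in> X"
  shows "p \<in> {1..n}" "\<tau> \<in> pending A 1 X w" "completed A 1 p w \<tau>"
    "\<And>w' \<tau>'. (p,w',\<tau>') \<in> X \<Longrightarrow> (w',\<tau>') \<noteq> (w,\<tau>) \<Longrightarrow> w' + cost \<tau>' \<le> w \<or> w + cost \<tau> \<le> w'"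
  using oex assms unfolding offline_exec_def by fastforce+

lemma per_proc:
  assumes big: "\<forall>v. t0 \<le> v \<and> v \<le> t \<longrightarrow> card (Pmax v) \<ge> n^2"
    and Good_def: "Good = {r \<in> E. cost (snd (snd r)) = lmax \<and> cmp (fst r) (fst (snd r)) (snd (snd r)) \<and>
          t0 \<le> fst (snd r) \<and> fst (snd r) + lmax / s \<le> t}"
    and finGood: "finite Good"
    and finTp: "finite Tp"
    and p: "p \<in> {1..n}"
    and Tp: "\<And>\<tau>. \<tau> \<in> Tp \<Longrightarrow> (p, xw \<tau>, \<tau>) \<in> X \<and> completed A 1 p (xw \<tau>) \<tau> \<and> xw \<tau> + cost \<tau> \<le> t
              \<and> cost \<tau> = lmax \<and> t0 \<le> xw \<tau>"
  shows "card Tp \<le> card {g \<in> Good. fst g = p} + 1"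
proof -
  have sp: "s > 0" using s1 by simp
  have lsl: "lmax / s < lmax" using s1 lminmax lmin0 by (simp add: divide_less_eq)
  define Tq where "Tq = {\<tau> \<in> Tp. t0 + lmax / s \<le> xw \<tau>}"
  have sep: "\<And>\<tau>1 \<tau>2. \<tau>1 \<in> Tp \<Longrightarrow> \<tau>2 \<in> Tp \<Longrightarrow> \<tau>1 \<noteq> \<tau>2 \<Longrightarrow>
      xw \<tau>1 + lmax \<le> xw \<tau>2 \<or> xw \<tau>2 + lmax \<le> xw \<tau>1"
  proof -
    fix \<tau>1 \<tau>2 assume a: "\<tau>1 \<in> Tp" "\<tau>2 \<in> Tp" "\<tau>1 \<noteq> \<tau>2"
    have "xw \<tau>2 + cost \<tau>2 \<le> xw \<tau>1 \<or> xw \<tau>1 + cost \<tau>1 \<le> xw \<tau>2"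
      using xrun(4)[of p "xw \<tau>1" \<tau>1 "xw \<tau>2" \<tau>2] Tp[OF a(1)] Tp[OF a(2)] a(3) by auto
    then show "xw \<tau>1 + lmax \<le> xw \<tau>2 \<or> xw \<tau>2 + lmax \<le> xw \<tau>1"
      using Tp[OF a(1)] Tp[OF a(2)] by auto
  qed
  have c1: "card (Tp - Tq) \<le> 1"
  proof -
    have "\<forall>a\<in>Tp - Tq. \<forall>b\<in>Tp - Tq. a = b"
    proof (intro ballI, rule ccontr)
      fix a b assume ab: "a \<in> Tp - Tq" "b \<in> Tp - Tq" "a \<noteq> b"
      have "xw a < t0 + lmax / s" "xw b < t0 + lmax / s" using ab unfolding Tq_def by auto
      moreover have "t0 \<le> xw a" "t0 \<le> xw b" using Tp ab by auto
      ultimately show False using sep[of a b] ab lsl by auto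
    qed
    then show ?thesis using card_le_Suc0_iff_eq[of "Tp - Tq"] finTp by auto
  qed
  define Q where "Q \<tau> g = (g \<in> {g \<in> Good. fst g = p} \<and> xw \<tau> < fst (snd g) + lmax / s \<and>
       fst (snd g) + lmax / s \<le> xw \<tau> + lmax)" for \<tau> g
  have exQ: "\<And>\<tau>. \<tau> \<in> Tq \<Longrightarrow> \<exists>g. Q \<tau> g"
  proof -
    fix \<tau> assume tq: "\<tau> \<in> Tq"
    have h: "(p, xw \<tau>, \<tau>) \<in> X" "completed A 1 p (xw \<tau>) \<tau>" "xw \<tau> + lmax \<le> t" "cost \<tau> = lmax"
      "t0 + lmax / s \<le> xw \<tau>"
    proof -
      have t: "\<tau> \<in> Tp" "t0 + lmax / s \<le> xw \<tau>" using tq unfolding Tq_def by auto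
      note tp = Tp[OF t(1)]
      show "(p, xw \<tau>, \<tau>) \<in> X" "completed A 1 p (xw \<tau>) \<tau>" "cost \<tau> = lmax"
        "t0 + lmax / s \<le> xw \<tau>" using tp t by auto
      show "xw \<tau> + lmax \<le> t" using tp by simp
    qed
    have al: "\<forall>x\<in>{xw \<tau>..xw \<tau> + lmax}. alive A p x" using h(2) h(4) unfolding completed_def by simp
    obtain u' \<tau>' where g: "(p,u',\<tau>') \<in> E" "cost \<tau>' = lmax" "cmp p u' \<tau>'" "t0 \<le> u'"
       "xw \<tau> < u' + lmax / s" "u' + lmax / s \<le> xw \<tau> + lmax"
      using good_near[OF big p al h(5) h(3)] by blast
    have "(p,u',\<tau>') \<in> Good" unfolding Good_def using g h(3) by auto
    then show "\<exists>g. Q \<tau> g" unfolding Q_def using g by (intro exI[of _ "(p,u',\<tau>')"]) auto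
  qed
  define gs where "gs \<tau> = (SOME g. Q \<tau> g)" for \<tau>
  have gsQ: "\<And>\<tau>. \<tau> \<in> Tq \<Longrightarrow> Q \<tau> (gs \<tau>)" unfolding gs_def using exQ by (rule someI_ex)
  have inj: "inj_on gs Tq"
  proof (rule inj_onI, rule ccontr)
    fix a b assume ab: "a \<in> Tq" "b \<in> Tq" "gs a = gs b" "a \<noteq> b"
    have "a \<in> Tp" "b \<in> Tp" using ab unfolding Tq_def by auto
    then have "xw a + lmax \<le> xw b \<or> xw b + lmax \<le> xw a" using sep ab(4) by blast
    then show False using gsQ[OF ab(1)] gsQ[OF ab(2)] ab(3) unfolding Q_def by auto
  qed
  have img: "gs ` Tq \<subseteq> {g \<in> Good. fst g = p}" using gsQ unfolding Q_def by blast
  have c2: "card Tq \<le> card {g \<in> Good. fst g = p}"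
    using card_inj_on_le[OF inj img] finGood by simp
  have "Tp = Tq \<union> (Tp - Tq)" unfolding Tq_def by auto
  then have "card Tp \<le> card Tq + card (Tp - Tq)" by (metis card_Un_le)
  then show ?thesis using c1 c2 by linarith
qed

end



context bsetting2 begin

lemma main: "card (Pmax t) \<le> card {\<tau> \<in> pending A 1 X t. cost \<tau> = lmax} + n^2 + 2*n"
proof (cases "card (Pmax t) < n^2")
  case True then show ?thesis by linarith
next
  case False
  then obtain t0 where t0t: "t0 \<le> t" and old: "card {\<tau> \<in> Pm t0. cost \<tau> = lmax} < n^2"
    and big: "\<forall>v. t0 \<le> v \<and> v \<le> t \<longrightarrow> card (Pmax v) \<ge> n^2"
    using exists_t0[of t] by (meson not_less)
  have sp: "s > 0" using s1 by simp
  have lsp: "lmax / s > 0" using lmin0 lminmax sp by simp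
  define I where "I = {\<tau> \<in> injected A. arr \<tau> \<le> t}"
  have finI: "finite I" using wf unfolding wf_pattern_def I_def by blast
  define Old where "Old = {\<tau> \<in> Pm t0. cost \<tau> = lmax}"
  define Arr where "Arr = {\<tau> \<in> injected A. cost \<tau> = lmax \<and> t0 \<le> arr \<tau> \<and> arr \<tau> \<le> t}"
  define Good where "Good = {r \<in> E. cost (snd (snd r)) = lmax \<and> cmp (fst r) (fst (snd r)) (snd (snd r)) \<and>
          t0 \<le> fst (snd r) \<and> fst (snd r) + lmax / s \<le> t}"
  define G where "G = (\<lambda>r. snd (snd r)) ` Good"
  define PX where "PX = {\<tau> \<in> pending A 1 X t. cost \<tau> = lmax}"
  define T where "T = Arr - PX"
  have finOld: "finite Old" by (rule finite_subset[OF _ finI]) (use t0t in \<open>auto simp: Old_def Pm_def I_def\<close>)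
  have finArr: "finite Arr" by (rule finite_subset[OF _ finI]) (auto simp: Arr_def I_def)
  have finPX: "finite PX" by (rule finite_subset[OF _ finI]) (auto simp: PX_def I_def pending_def)
  have finT: "finite T" unfolding T_def using finArr by simp
  have ginj: "inj_on (\<lambda>r. snd (snd r)) Good"
  proof (rule inj_onI)
    fix r1 r2 assume a: "r1 \<in> Good" "r2 \<in> Good" "snd (snd r1) = snd (snd r2)"
    obtain p u \<tau> where r1: "r1 = (p,u,\<tau>)" by (cases r1) auto
    obtain q v \<sigma> where r2: "r2 = (q,v,\<sigma>)" by (cases r2) auto
    have h1: "(p,u,\<tau>) \<in> E" "cost \<tau> = lmax" "cmp p u \<tau>" "t0 \<le> u" "u + lmax / s \<le> t"
      using a(1) unfolding r1 Good_def by auto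
    have h2: "(q,v,\<tau>) \<in> E" "cmp q v \<tau>" "t0 \<le> v" "v + lmax / s \<le> t"
      using a(2,3) unfolding r1 r2 Good_def by auto
    have ut: "u \<le> t" "v \<le> t" using h1(5) h2(4) lsp by linarith+
    show "r1 = r2"
    proof (cases "u \<le> v")
      case True
      have "p = q \<and> u = v" using noredund[OF big h1(1) h2(1) h1(2) h1(3) h1(4) True ut(2)] .
      then show ?thesis using r1 r2 a(3) by simp
    next
      case False
      then have "q = p \<and> v = u" using noredund[OF big h2(1) h1(1) h1(2) h2(2) h2(3) _ ut(1)] by simp
      then show ?thesis using r1 r2 a(3) by simp
    qed
  qed
  have GI: "G \<subseteq> I"
  proof
    fix x assume "x \<in> G"
    then obtain r where r: "r \<in> Good" "x = snd (snd r)" unfolding G_def by blast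
    obtain p u \<tau> where rr: "r = (p,u,\<tau>)" by (cases r) auto
    have "(p,u,\<tau>) \<in> E" "u + lmax / s \<le> t" using r(1) unfolding rr Good_def by auto
    then show "x \<in> I" using run_in_pend pend_inj r(2) rr lsp unfolding I_def by fastforce
  qed
  have finG: "finite G" using GI finI finite_subset by blast
  have finGood: "finite Good" using finG ginj finite_imageD unfolding G_def by blast
  have cG: "card G = card Good" unfolding G_def using card_image[OF ginj] .
  have disj: "Pmax t \<inter> G = {}"
  proof (rule ccontr)
    assume "Pmax t \<inter> G \<noteq> {}"
    then obtain x where x: "x \<in> Pmax t" "x \<in> G" by blast
    then obtain r where r: "r \<in> Good" "x = snd (snd r)" unfolding G_def by blast
    obtain p u \<tau> where rr: "r = (p,u,\<tau>)" by (cases r) auto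
    have "(p,u,\<tau>) \<in> E" "cmp p u \<tau>" "u + cost \<tau> / s \<le> t" using r(1) unfolding rr Good_def by auto
    then show False using x(1) r(2) rr unfolding pend_iff by auto
  qed
  have sub1: "Pmax t \<subseteq> Old \<union> Arr"
  proof
    fix x assume x: "x \<in> Pmax t"
    then have xi: "x \<in> injected A" "arr x \<le> t" "cost x = lmax"
      and nc: "\<not> (\<exists>p t1. (p, t1, x) \<in> E \<and> cmp p t1 x \<and> t1 + cost x / s \<le> t)"
      unfolding pend_iff by auto
    show "x \<in> Old \<union> Arr"
    proof (cases "arr x < t0")
      case True
      have "\<not> (\<exists>p t1. (p, t1, x) \<in> E \<and> cmp p t1 x \<and> t1 + cost x / s < t0)" using nc t0t by force
      then show ?thesis using True xi unfolding Old_def Pm_def by auto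
    next
      case False then show ?thesis using xi unfolding Arr_def by auto
    qed
  qed
  have sub2: "G \<subseteq> Old \<union> Arr"
  proof
    fix x assume "x \<in> G"
    then obtain r where r: "r \<in> Good" "x = snd (snd r)" unfolding G_def by blast
    obtain p u \<tau> where rr: "r = (p,u,\<tau>)" by (cases r) auto
    have h: "(p,u,\<tau>) \<in> E" "t0 \<le> u" "u + lmax / s \<le> t" "cost \<tau> = lmax" using r(1) unfolding rr Good_def by auto
    have xt: "x = \<tau>" using r(2) rr by simp
    have "\<tau> \<in> pend u" using run_in_pend[OF h(1)] .
    then have xi: "\<tau> \<in> injected A" "arr \<tau> \<le> u"
      and nc: "\<not> (\<exists>p t1. (p, t1, \<tau>) \<in> E \<and> cmp p t1 \<tau> \<and> t1 + cost \<tau> / s \<le> u)"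
      unfolding pend_iff by auto
    show "x \<in> Old \<union> Arr"
    proof (cases "arr \<tau> < t0")
      case True
      have "\<not> (\<exists>p t1. (p, t1, \<tau>) \<in> E \<and> cmp p t1 \<tau> \<and> t1 + cost \<tau> / s < t0)" using nc h(2) by force
      then show ?thesis using True xi xt h(4) unfolding Old_def Pm_def by auto
    next
      case False
      have "u \<le> t" using h(3) lsp by linarith
      then show ?thesis using False xi xt h(4) unfolding Arr_def by auto
    qed
  qed
  have "card (Pmax t) + card G = card (Pmax t \<union> G)"
    using card_Un_disjoint[OF _ finG disj] finite_pend by simp
  also have "\<dots> \<le> card (Old \<union> Arr)" using sub1 sub2 finOld finArr by (intro card_mono) auto
  also have "\<dots> \<le> card Old + card Arr" by (rule card_Un_le)
  finally have B1: "card (Pmax t) + card G \<le> card Old + card Arr" .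
  have "card Arr \<le> card (PX \<union> T)" using finPX finT unfolding T_def by (intro card_mono) auto
  also have "\<dots> \<le> card PX + card T" by (rule card_Un_le)
  finally have X1: "card Arr \<le> card PX + card T" .
  have exT: "\<And>\<tau>. \<tau> \<in> T \<Longrightarrow> \<exists>pw. (fst pw, snd pw, \<tau>) \<in> X \<and> completed A 1 (fst pw) (snd pw) \<tau> \<and> snd pw + cost \<tau> \<le> t"
  proof -
    fix \<tau> assume "\<tau> \<in> T"
    then have "\<tau> \<in> injected A" "arr \<tau> \<le> t" "cost \<tau> = lmax" "\<tau> \<notin> pending A 1 X t"
      unfolding T_def Arr_def PX_def by auto
    then obtain p w where "(p,w,\<tau>) \<in> X" "completed A 1 p w \<tau>" "w + cost \<tau> / 1 \<le> t"
      unfolding pending_def by auto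
    then show "?thesis \<tau>" by (intro exI[of _ "(p,w)"]) auto
  qed
  define xr where "xr \<tau> = (SOME pw. (fst pw, snd pw, \<tau>) \<in> X \<and> completed A 1 (fst pw) (snd pw) \<tau> \<and> snd pw + cost \<tau> \<le> t)" for \<tau>
  have xrP: "\<And>\<tau>. \<tau> \<in> T \<Longrightarrow> (fst (xr \<tau>), snd (xr \<tau>), \<tau>) \<in> X \<and> completed A 1 (fst (xr \<tau>)) (snd (xr \<tau>)) \<tau> \<and> snd (xr \<tau>) + cost \<tau> \<le> t"
    unfolding xr_def using exT by (rule someI_ex)
  have xrT: "\<And>\<tau>. \<tau> \<in> T \<Longrightarrow> cost \<tau> = lmax \<and> t0 \<le> snd (xr \<tau>)"
  proof -
    fix \<tau> assume tT: "\<tau> \<in> T"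
    have "\<tau> \<in> pending A 1 X (snd (xr \<tau>))" using xrun(2) xrP[OF tT] by blast
    then have "arr \<tau> \<le> snd (xr \<tau>)" unfolding pending_def by auto
    moreover have "cost \<tau> = lmax" "t0 \<le> arr \<tau>" using tT unfolding T_def Arr_def by auto
    ultimately show "cost \<tau> = lmax \<and> t0 \<le> snd (xr \<tau>)" by simp
  qed
  define Tp where "Tp p = {\<tau> \<in> T. fst (xr \<tau>) = p}" for p
  have Tun: "T = (\<Union>p\<in>{1..n}. Tp p)"
  proof
    show "T \<subseteq> (\<Union>p\<in>{1..n}. Tp p)"
    proof
      fix \<tau> assume tT: "\<tau> \<in> T"
      have "fst (xr \<tau>) \<in> {1..n}" using xrun(1) xrP[OF tT] by blast
      then show "\<tau> \<in> (\<Union>p\<in>{1..n}. Tp p)" using tT unfolding Tp_def by blast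
    qed
  qed (auto simp: Tp_def)
  have cT: "card T \<le> (\<Sum>p\<in>{1..n}. card (Tp p))"
    unfolding Tun by (rule card_UN_le) simp
  have perp: "\<And>p. p \<in> {1..n} \<Longrightarrow> card (Tp p) \<le> card {g \<in> Good. fst g = p} + 1"
  proof -
    fix p assume p: "p \<in> {1..n}"
    show "card (Tp p) \<le> card {g \<in> Good. fst g = p} + 1"
    proof (rule per_proc[OF big Good_def finGood _ p, where xw="\<lambda>\<tau>. snd (xr \<tau>)"])
      show "finite (Tp p)" using finT unfolding Tp_def by simp
    next
      fix \<tau> assume "\<tau> \<in> Tp p"
      then have tT: "\<tau> \<in> T" and fp: "fst (xr \<tau>) = p" unfolding Tp_def by auto
      show "(p, snd (xr \<tau>), \<tau>) \<in> X \<and> completed A 1 p (snd (xr \<tau>)) \<tau> \<and> snd (xr \<tau>) + cost \<tau> \<le> t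
              \<and> cost \<tau> = lmax \<and> t0 \<le> snd (xr \<tau>)" using xrP[OF tT] xrT[OF tT] fp by auto
    qed
  qed
  have "(\<Sum>p\<in>{1..n}. card (Tp p)) \<le> (\<Sum>p\<in>{1..n}. card {g \<in> Good. fst g = p} + 1)"
    using perp by (rule sum_mono)
  also have "\<dots> = (\<Sum>p\<in>{1..n}. card {g \<in> Good. fst g = p}) + n" by (subst sum.distrib) simp
  also have "(\<Sum>p\<in>{1..n}. card {g \<in> Good. fst g = p}) = card (\<Union>p\<in>{1..n}. {g \<in> Good. fst g = p})"
    by (rule card_UN_disjoint[symmetric]) (use finGood in auto)
  also have "(\<Union>p\<in>{1..n}. {g \<in> Good. fst g = p}) = Good"
  proof
    show "Good \<subseteq> (\<Union>p\<in>{1..n}. {g \<in> Good. fst g = p})"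
    proof
      fix g assume g: "g \<in> Good"
      obtain p u \<tau> where gg: "g = (p,u,\<tau>)" by (cases g) auto
      have "(p,u,\<tau>) \<in> E" using g gg unfolding Good_def by auto
      then have "p \<in> {1..n}" by (rule run_props(1))
      then show "g \<in> (\<Union>p\<in>{1..n}. {g \<in> Good. fst g = p})" using g gg by auto
    qed
  qed auto
  finally have X2: "card T \<le> card Good + n" using cT by linarith
  have "card Old < n^2" using old unfolding Old_def .
  then show ?thesis using B1 X1 X2 cG unfolding PX_def by linarith
qed

end


theorem lemma13:
  fixes n \<gamma> :: nat and lmin lmax s t :: real and A :: pattern and E X :: "run set"
  assumes "n \<ge> 1"
    and "0 < lmin" and "lmin < lmax"
    and "s > 1"
    and "\<gamma> = nat \<lceil>(lmax - s * lmin) / ((s - 1) * lmin)\<rceil>"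
    and "s \<ge> (real \<gamma> * lmin + lmax) / lmax"
    and "wf_pattern A"
    and "\<forall>\<tau> \<in> injected A. cost \<tau> = lmin \<or> cost \<tau> = lmax"
    and "burst_exec n \<gamma> lmin lmax s A E"
    and "offline_exec n A X"
  shows "card {\<tau> \<in> pending A s E t. cost \<tau> = lmax}
           \<le> card {\<tau> \<in> pending A 1 X t. cost \<tau> = lmax} + n ^ 2 + 2 * n"
proof -
  interpret bsetting2 n \<gamma> lmin lmax s A E X
    using assms by unfold_locales auto
  show ?thesis using main[of t] .
qed

end
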